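(* Let $m\ge 1$ and $\epsilon_L>0$. Fix a list of $2m$ spatial points $p_1,\dots,p_{2m}$ (the selected point list assigned to a trajectory). For a trajectory $\tau$ (a finite sequence of spatial points), let $f_k$ denote the number of occurrences of $p_k$ in $\tau$. The local perturbation mechanism $\mathcal{M}$ applied to $\tau$ outputs the vector $(f_1^*,\dots,f_{2m}^* )$ computed as follows. Stage 1: for $k=1,\dots,m$, sample $\eta\sim Lap(-f_k,1/\epsilon_L)$, set $f_k^*=\max(\mathrm{RoundInt}(f_k+\eta),0)$; then set $\bar\mu=\frac1m\sum_{k=1}^m (f_k^*-f_k)$. Stage 2: for $k=m+1,\dots,2m$, sample $\eta\sim Lap(-\bar\mu,1/\epsilon_L)$ and set $f_k^*=\max(\mathrm{RoundInt}(f_k+\eta),0)$. All Laplace samples are drawn independently (given the quantities they depend on). Then $\mathcal{M}$ provides $\epsilon_L$-differential privacy to a trajectory $\tau$, i.e. for any two adjacent trajectories $\tau,\tau'$ (differing in at most one point) and any output $\tilde\tau$, $\Pr[\mathcal{M}(\tau)=\tilde\tau]\le e^{\epsilon_L}\Pr[\mathcal{M}(\tau')=\tilde\tau]$.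
   Context: $Lap(\mu,\lambda)$ denotes the Laplace distribution with mean $\mu$ and scale $\lambda$, density $\frac{1}{2\lambda}\exp(-|x-\mu|/\lambda)$. $\mathrm{RoundInt}$ rounds a real number to the nearest integer. Two trajectories are adjacent if they differ in at most one point, so that their occurrence-count vectors $(f_1,\dots,f_{2m})$ over the fixed points $p_1,\dots,p_{2m}$ differ by at most $1$ in $\ell_1$-norm. *)

theory Defs
  imports "HOL-Probability.Probability"
begin

definition lap_density :: "real \<Rightarrow> real \<Rightarrow> real \<Rightarrow> real" where
  "lap_density mu lam x = exp (- \<bar>x - mu\<bar> / lam) / (2 * lam)"

definition Lap :: "real \<Rightarrow> real \<Rightarrow> real measure" where
  "Lap mu lam = density lborel (\<lambda>x. ennreal (lap_density mu lam x))"

definition perturb :: "real \<Rightarrow> real \<Rightarrow> real \<Rightarrow> int measure" where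
  "perturb f mu lam = distr (Lap mu lam) (count_space UNIV) (\<lambda>eta. max (round (f + eta)) 0)"

fun indep_seq :: "'b measure list \<Rightarrow> 'b list measure" where
  "indep_seq [] = return (count_space UNIV) []"
| "indep_seq (M # Ms) =
     bind M (\<lambda>x. bind (indep_seq Ms) (\<lambda>xs. return (count_space UNIV) (x # xs)))"

text \<open>The local perturbation mechanism; p k is the point p_k (k = 1..2m);
  the output list is (f_1^*, ..., f_{2m}^*).\<close>
definition mech :: "nat \<Rightarrow> real \<Rightarrow> (nat \<Rightarrow> 'a) \<Rightarrow> 'a list \<Rightarrow> int list measure" where
  "mech m epsL p \<tau> =
    (let f = (\<lambda>k. real (count_list \<tau> (p k))); lam = 1 / epsL in
     bind (indep_seq (map (\<lambda>k. perturb (f k) (- f k) lam) [1..<m+1]))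
       (\<lambda>s1. let mu = (\<Sum>k=1..m. real_of_int (s1 ! (k - 1)) - f k) / real m in
          bind (indep_seq (map (\<lambda>k. perturb (f k) (- mu) lam) [m+1..<2*m+1]))
            (\<lambda>s2. return (count_space UNIV) (s1 @ s2))))"

definition differ_one_point :: "'a list \<Rightarrow> 'a list \<Rightarrow> bool" where
  "differ_one_point \<tau> \<tau>' \<longleftrightarrow>
     (\<exists>xs ys x. (\<tau> = xs @ ys \<and> \<tau>' = xs @ x # ys) \<or> (\<tau>' = xs @ ys \<and> \<tau> = xs @ x # ys)) \<or>
     (\<exists>xs ys x y. \<tau> = xs @ x # ys \<and> \<tau>' = xs @ y # ys) \<or> \<tau> = \<tau>'"

definition adjacent :: "nat \<Rightarrow> (nat \<Rightarrow> 'a) \<Rightarrow> 'a list \<Rightarrow> 'a list \<Rightarrow> bool" where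
  "adjacent m p \<tau> \<tau>' \<longleftrightarrow> differ_one_point \<tau> \<tau>' \<and>
     (\<Sum>k=1..2*m. \<bar>real (count_list \<tau> (p k)) - real (count_list \<tau>' (p k))\<bar>) \<le> 1"

end

theory Submission
  imports Defs
begin

lemma lapd_le:
  assumes "lam > 0"
  shows "lap_density mu lam x \<le> exponential_density (1/lam) (x - mu) / 2 + exponential_density (1/lam) (mu - x) / 2"
  using assms by (auto simp: lap_density_def exponential_density_def field_simps abs_if)

lemma ennreal_half_mult: "0 \<le> a \<Longrightarrow> ennreal (a/2) = inverse 2 * ennreal a"
proof -
  assume a: "0 \<le> a"
  have "ennreal (a/2) = ennreal a / numeral (num.Bit0 num.One)" using ennreal_divide_numeral[OF a, of "num.Bit0 num.One"] by simp
  then show ?thesis by (simp add: divide_ennreal_def mult.commute)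
qed

lemma inv2: "inverse 2 + inverse 2 = (1::ennreal)"
proof -
  have "ennreal (1/2) + ennreal (1/2) = ennreal (1/2 + 1/2)"
    by (rule ennreal_plus[symmetric]) auto
  then show ?thesis by (simp del: ennreal_plus)
qed

lemma expd_int:
  assumes "l > 0"
  shows "(\<integral>\<^sup>+x. ennreal (exponential_density l x) \<partial>lborel) = 1"
proof -
  interpret prob_space "density lborel (exponential_density l)"
    using prob_space_exponential_density[OF assms] .
  show ?thesis using emeasure_space_1 by (simp add: emeasure_density)
qed

lemma expd_shift:
  assumes "l > 0"
  shows "(\<integral>\<^sup>+x. ennreal (exponential_density l (x - mu)) \<partial>lborel) = 1"
    and "(\<integral>\<^sup>+x. ennreal (exponential_density l (mu - x)) \<partial>lborel) = 1"
proof -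
  have m: "(\<lambda>x. ennreal (exponential_density l x)) \<in> borel_measurable borel" by simp
  show "(\<integral>\<^sup>+x. ennreal (exponential_density l (x - mu)) \<partial>lborel) = 1"
    using nn_integral_real_affine[OF m, of 1 "-mu"] expd_int[OF assms] by simp
  show "(\<integral>\<^sup>+x. ennreal (exponential_density l (mu - x)) \<partial>lborel) = 1"
    using nn_integral_real_affine[OF m, of "-1" "mu"] expd_int[OF assms] by simp
qed

lemma lap_measurable[measurable]: "(\<lambda>x. ennreal (lap_density mu lam x)) \<in> borel_measurable borel"
  unfolding lap_density_def by simp

lemma subprob_Lap:
  assumes "lam > 0"
  shows "subprob_space (Lap mu lam)"
proof (rule subprob_spaceI)
  show "space (Lap mu lam) \<noteq> {}" by (simp add: Lap_def)
  have "emeasure (Lap mu lam) (space (Lap mu lam)) = (\<integral>\<^sup>+x. ennreal (lap_density mu lam x) \<partial>lborel)"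
    by (simp add: Lap_def emeasure_density)
  also have "\<dots> \<le> (\<integral>\<^sup>+x. ennreal (1/2) * ennreal (exponential_density (1/lam) (x - mu)) + ennreal (1/2) * ennreal (exponential_density (1/lam) (mu - x)) \<partial>lborel)"
  proof (rule nn_integral_mono)
    fix x
    have e1: "0 \<le> exponential_density (1/lam) (x - mu)" "0 \<le> exponential_density (1/lam) (mu - x)"
      using assms by (auto intro!: exponential_density_nonneg)
    have "ennreal (lap_density mu lam x) \<le> ennreal (exponential_density (1/lam) (x - mu) / 2 + exponential_density (1/lam) (mu - x) / 2)"
      using lapd_le[OF assms] by (rule ennreal_leI)
    also have "\<dots> = ennreal (1/2) * ennreal (exponential_density (1/lam) (x - mu)) + ennreal (1/2) * ennreal (exponential_density (1/lam) (mu - x))"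
      apply (subst ennreal_plus)
        apply (use e1 in simp)
       apply (use e1 in simp)
      apply (simp only: ennreal_half_mult[OF e1(1)] ennreal_half_mult[OF e1(2)])
      apply simp
      done
    finally show "ennreal (lap_density mu lam x) \<le> ennreal (1/2) * ennreal (exponential_density (1/lam) (x - mu)) + ennreal (1/2) * ennreal (exponential_density (1/lam) (mu - x))" .
  qed
  also have "\<dots> = (\<integral>\<^sup>+x. ennreal (1/2) * ennreal (exponential_density (1/lam) (x - mu)) \<partial>lborel)
     + (\<integral>\<^sup>+x. ennreal (1/2) * ennreal (exponential_density (1/lam) (mu - x)) \<partial>lborel)"
    by (subst nn_integral_add) auto
  also have "\<dots> = 1"
    using expd_shift[of "1/lam" mu] assms
    by (simp add: nn_integral_cmult inv2)
  finally show "emeasure (Lap mu lam) (space (Lap mu lam)) \<le> 1" .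
qed

lemma sets_Lap[simp]: "sets (Lap mu lam) = sets borel" by (simp add: Lap_def)
lemma space_Lap[simp]: "space (Lap mu lam) = UNIV" by (simp add: Lap_def)

lemma R_meas[measurable]: "(\<lambda>t::real. max (round t) (0::int)) \<in> measurable borel (count_space UNIV)"
proof -
  have "(\<lambda>t::real. round t) \<in> measurable borel (count_space UNIV)"
    unfolding round_def by measurable
  moreover have "(\<lambda>i::int. max i 0) \<in> measurable (count_space UNIV) (count_space UNIV)" by simp
  ultimately show ?thesis using measurable_compose by blast
qed

lemma Rf_meas: "(\<lambda>eta. max (round (f + eta)) (0::int)) \<in> measurable (Lap mu lam) (count_space UNIV)"
proof -
  have "(\<lambda>eta::real. f + eta) \<in> measurable borel borel" by simp
  then have "(\<lambda>eta. max (round (f + eta)) (0::int)) \<in> measurable borel (count_space UNIV)"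
    using measurable_compose[OF _ R_meas] by blast
  moreover have "measurable (Lap mu lam) (count_space UNIV) = measurable borel (count_space UNIV)"
    by (rule measurable_cong_sets) simp_all
  ultimately show ?thesis by metis
qed

definition G :: "real \<Rightarrow> real \<Rightarrow> int \<Rightarrow> ennreal" where
  "G a lam z = (\<integral>\<^sup>+t. ennreal (lap_density a lam t) * indicator {t. max (round t) 0 = z} t \<partial>lborel)"

lemma ind_meas[measurable]: "{t::real. max (round t) 0 = (z::int)} \<in> sets borel"
proof -
  have "{t::real. max (round t) 0 = (z::int)} = (\<lambda>t::real. max (round t) (0::int)) -` {z} \<inter> space borel" by auto
  also have "\<dots> \<in> sets borel" by (rule measurable_sets[OF R_meas]) simp
  finally show ?thesis .
qed

lemma perturb_sing: "emeasure (perturb f mu lam) {z} = G (f + mu) lam z"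
proof -
  have "emeasure (perturb f mu lam) {z} = emeasure (Lap mu lam) ((\<lambda>eta. max (round (f + eta)) 0) -` {z} \<inter> space (Lap mu lam))"
    unfolding perturb_def by (rule emeasure_distr[OF Rf_meas]) simp
  also have "(\<lambda>eta. max (round (f + eta)) 0) -` {z} \<inter> space (Lap mu lam) = {eta. max (round (f + eta)) 0 = z}" by auto
  also have "emeasure (Lap mu lam) {eta. max (round (f + eta)) 0 = z}
     = (\<integral>\<^sup>+eta. ennreal (lap_density mu lam eta) * indicator {eta. max (round (f + eta)) 0 = z} eta \<partial>lborel)"
  proof -
    have "{eta. max (round (f + eta)) 0 = z} = (\<lambda>eta. max (round (f + eta)) (0::int)) -` {z} \<inter> space borel" by auto
    also have "\<dots> \<in> sets borel"
      by (rule measurable_sets[OF measurable_compose[OF _ R_meas]]) auto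
    finally have "{eta. max (round (f + eta)) 0 = z} \<in> sets lborel" by simp
    then show ?thesis unfolding Lap_def by (subst emeasure_density) auto
  qed
  also have "\<dots> = G (f + mu) lam z"
  proof -
    have m: "(\<lambda>t. ennreal (lap_density (f + mu) lam t) * indicator {t. max (round t) 0 = z} t) \<in> borel_measurable borel"
      by measurable
    have "G (f + mu) lam z = (\<integral>\<^sup>+x. ennreal (lap_density (f + mu) lam (f + 1 * x)) * indicator {t. max (round t) 0 = z} (f + 1 * x) \<partial>lborel)"
      unfolding G_def using nn_integral_real_affine[OF m, of 1 f] by simp
    also have "\<dots> = (\<integral>\<^sup>+eta. ennreal (lap_density mu lam eta) * indicator {eta. max (round (f + eta)) 0 = z} eta \<partial>lborel)"
      by (intro nn_integral_cong) (simp add: lap_density_def indicator_def)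
    finally show ?thesis by simp
  qed
  finally show ?thesis .
qed

lemma lapd_cmp:
  assumes "lam > 0"
  shows "lap_density a lam t \<le> exp (\<bar>a - a'\<bar> / lam) * lap_density a' lam t"
proof -
  have "- \<bar>t - a\<bar> / lam \<le> \<bar>a - a'\<bar> / lam + - \<bar>t - a'\<bar> / lam"
    using assms by (simp add: field_simps)
  then have "exp (- \<bar>t - a\<bar> / lam) \<le> exp (\<bar>a - a'\<bar> / lam) * exp (- \<bar>t - a'\<bar> / lam)"
    by (simp add: exp_add[symmetric])
  then show ?thesis using assms unfolding lap_density_def
    by (simp add: divide_right_mono)
qed

lemma G_cmp:
  assumes "lam > 0"
  shows "G a lam z \<le> ennreal (exp (\<bar>a - a'\<bar> / lam)) * G a' lam z"
proof -
  have "G a lam z \<le> (\<integral>\<^sup>+t. ennreal (exp (\<bar>a - a'\<bar> / lam)) * (ennreal (lap_density a' lam t) * indicator {t. max (round t) 0 = z} t) \<partial>lborel)"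
    unfolding G_def
  proof (intro nn_integral_mono)
    fix t
    have "ennreal (lap_density a lam t) \<le> ennreal (exp (\<bar>a - a'\<bar> / lam)) * ennreal (lap_density a' lam t)"
      using lapd_cmp[OF assms, where a=a and a'=a' and t=t] by (simp add: ennreal_mult'[symmetric] ennreal_leI)
    then show "ennreal (lap_density a lam t) * indicator {t. max (round t) 0 = z} t
      \<le> ennreal (exp (\<bar>a - a'\<bar> / lam)) * (ennreal (lap_density a' lam t) * indicator {t. max (round t) 0 = z} t)"
      by (auto simp: indicator_def)
  qed
  also have "\<dots> = ennreal (exp (\<bar>a - a'\<bar> / lam)) * G a' lam z"
    unfolding G_def by (rule nn_integral_cmult) measurable
  finally show ?thesis .
qed

lemma sets_perturb[simp]: "sets (perturb f mu lam) = sets (count_space UNIV)"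
  by (simp add: perturb_def)

lemma space_perturb[simp]: "space (perturb f mu lam) = UNIV"
  by (simp add: perturb_def)

lemma subprob_perturb:
  assumes "lam > 0" shows "subprob_space (perturb f mu lam)"
  unfolding perturb_def
  by (rule subprob_space.subprob_space_distr[OF subprob_Lap[OF assms] Rf_meas]) simp

lemma perturb_eq:
  assumes "f + mu = f' + mu'"
  shows "perturb f mu lam = perturb f' mu' lam"
  by (rule measure_eqI_countable[where A=UNIV]) (auto simp: perturb_sing assms)

lemma perturb_cmp:
  assumes "lam > 0"
  shows "emeasure (perturb f mu lam) {z} \<le> ennreal (exp (\<bar>(f + mu) - (f' + mu')\<bar> / lam)) * emeasure (perturb f' mu' lam) {z}"
  using G_cmp[OF assms] by (simp add: perturb_sing)


definition okm :: "'b measure \<Rightarrow> bool" where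
  "okm M \<longleftrightarrow> subprob_space M \<and> sets M = sets (count_space (UNIV :: 'b set))"

lemma okm_space: "okm M \<Longrightarrow> space M = UNIV"
  unfolding okm_def by (metis sets_eq_imp_space_eq space_count_space)

lemma okm_meas: "okm M \<Longrightarrow> (g :: 'b \<Rightarrow> 'c) \<in> measurable M N \<longleftrightarrow> g \<in> UNIV \<rightarrow> space N"
proof -
  assume "okm M"
  then have "measurable M N = measurable (count_space UNIV) N"
    unfolding okm_def by (intro measurable_cong_sets) auto
  then show ?thesis by simp
qed

lemma okm_return: "okm (return (count_space UNIV) x)"
  unfolding okm_def by (simp add: subprob_space_return)

lemma okm_subalg: "okm N \<Longrightarrow> N \<in> space (subprob_algebra (count_space UNIV))"
  unfolding okm_def by (simp add: space_subprob_algebra)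

lemma okm_bind:
  assumes "okm M" "\<And>x. okm (K x)"
  shows "okm (bind M K)"
proof -
  have K: "K \<in> measurable M (subprob_algebra (count_space UNIV))"
    using assms by (simp add: okm_meas okm_subalg)
  have "space M \<noteq> {}" using okm_space[OF assms(1)] by simp
  moreover have "sets (bind M K) = sets (count_space UNIV)"
    by (rule sets_bind) (use assms \<open>space M \<noteq> {}\<close> in \<open>auto simp: okm_def\<close>)
  ultimately show ?thesis
    using assms K unfolding okm_def
    by (auto intro!: subprob_space_bind)
qed

lemma okm_indep: "(\<And>M. M \<in> set Ms \<Longrightarrow> okm M) \<Longrightarrow> okm (indep_seq Ms)"
proof (induction Ms)
  case Nil then show ?case by (simp add: okm_return)
next
  case (Cons M Ms)
  then show ?case by (auto intro!: okm_bind okm_return)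
qed

lemma emeasure_bind_ok:
  assumes "okm M" "\<And>x. okm (K x)"
  shows "emeasure (bind M K) A = (\<integral>\<^sup>+x. emeasure (K x) A \<partial>M)"
proof -
  have K: "K \<in> measurable M (subprob_algebra (count_space UNIV))"
    using assms by (simp add: okm_meas okm_subalg)
  have "space M \<noteq> {}" using okm_space[OF assms(1)] by simp
  then show ?thesis by (rule emeasure_bind[OF _ K]) simp
qed

lemma indep_cons:
  assumes "okm M" "\<And>M. M \<in> set Ms \<Longrightarrow> okm M"
  shows "emeasure (indep_seq (M # Ms)) {zs} =
    (case zs of [] \<Rightarrow> 0 | z # zs' \<Rightarrow> emeasure M {z} * emeasure (indep_seq Ms) {zs'})"
proof -
  have I: "okm (indep_seq Ms)" using assms(2) by (rule okm_indep)
  have Kok: "\<And>x. okm (bind (indep_seq Ms) (\<lambda>xs. return (count_space UNIV) (x # xs)))"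
    by (intro okm_bind I okm_return)
  have inner: "emeasure (bind (indep_seq Ms) (\<lambda>xs. return (count_space UNIV) (x # xs))) {zs}
     = (\<integral>\<^sup>+xs. indicator {zs} (x # xs) \<partial>indep_seq Ms)" for x
    by (subst emeasure_bind_ok[OF I okm_return]) simp
  have "emeasure (indep_seq (M # Ms)) {zs} =
     (\<integral>\<^sup>+x. (\<integral>\<^sup>+xs. indicator {zs} (x # xs) \<partial>indep_seq Ms) \<partial>M)"
    by (simp add: emeasure_bind_ok[OF assms(1) Kok] inner)
  also have "\<dots> = (case zs of [] \<Rightarrow> 0 | z # zs' \<Rightarrow> emeasure M {z} * emeasure (indep_seq Ms) {zs'})"
  proof (cases zs)
    case Nil then show ?thesis by (simp add: indicator_def)
  next
    case (Cons z zs')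
    have "(\<integral>\<^sup>+xs. indicator {zs} (x # xs) \<partial>indep_seq Ms) = emeasure (indep_seq Ms) {zs'} * indicator {z} x" for x
    proof -
      have "(\<integral>\<^sup>+xs. indicator {zs} (x # xs) \<partial>indep_seq Ms) = (\<integral>\<^sup>+xs. indicator {z} x * indicator {zs'} xs \<partial>indep_seq Ms)"
        by (intro nn_integral_cong) (simp add: Cons indicator_def)
      also have "\<dots> = indicator {z} x * emeasure (indep_seq Ms) {zs'}"
        by (rule nn_integral_cmult_indicator) (use I in \<open>simp add: okm_def\<close>)
      finally show ?thesis by (simp add: mult.commute)
    qed
    then have "(\<integral>\<^sup>+x. (\<integral>\<^sup>+xs. indicator {zs} (x # xs) \<partial>indep_seq Ms) \<partial>M)
      = (\<integral>\<^sup>+x. emeasure (indep_seq Ms) {zs'} * indicator {z} x \<partial>M)" by simp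
    also have "\<dots> = emeasure (indep_seq Ms) {zs'} * emeasure M {z}"
      by (rule nn_integral_cmult_indicator) (use assms(1) in \<open>simp add: okm_def\<close>)
    finally show ?thesis by (simp add: Cons mult.commute)
  qed
  finally show ?thesis .
qed

lemma indep_cmp:
  assumes "length Ns = length Ms" "length cs = length Ms"
    and "\<And>M. M \<in> set Ms \<Longrightarrow> okm M" "\<And>N. N \<in> set Ns \<Longrightarrow> okm N"
    and "\<And>i z. i < length Ms \<Longrightarrow> emeasure (Ms ! i) {z} \<le> ennreal (exp (cs ! i)) * emeasure (Ns ! i) {z}"
  shows "emeasure (indep_seq Ms) {zs} \<le> ennreal (exp (sum_list cs)) * emeasure (indep_seq Ns) {zs}"
  using assms
proof (induction Ms arbitrary: Ns cs zs)
  case Nil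
  then show ?case by (simp add: indicator_def)
next
  case (Cons M Ms)
  obtain N Ns' where Ns: "Ns = N # Ns'" using Cons.prems(1) by (cases Ns) auto
  obtain c cs' where cs: "cs = c # cs'" using Cons.prems(2) by (cases cs) auto
  have IH: "emeasure (indep_seq Ms) {zs'} \<le> ennreal (exp (sum_list cs')) * emeasure (indep_seq Ns') {zs'}" for zs'
    apply (rule Cons.IH)
    using Cons.prems Ns cs apply auto
    using Cons.prems(5)[of "Suc i" for i] by force
  have hd: "emeasure M {z} \<le> ennreal (exp c) * emeasure N {z}" for z
    using Cons.prems(5)[of 0 z] Ns cs by simp
  have okM: "okm M" "\<And>M. M \<in> set Ms \<Longrightarrow> okm M" using Cons.prems by auto
  have okN: "okm N" "\<And>M. M \<in> set Ns' \<Longrightarrow> okm M" using Cons.prems Ns by auto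
  note eM = indep_cons[OF okM, where zs=zs] and eN = indep_cons[OF okN, where zs=zs]
  show ?case
  proof (cases zs)
    case Nil then show ?thesis
      using eM by (simp del: indep_seq.simps)
  next
    fix z zs' assume Cons2: "zs = z # zs'"
    have "emeasure (indep_seq (M # Ms)) {zs} = emeasure M {z} * emeasure (indep_seq Ms) {zs'}"
      using eM Cons2 by (simp del: indep_seq.simps)
    also have "\<dots> \<le> (ennreal (exp c) * emeasure N {z}) * (ennreal (exp (sum_list cs')) * emeasure (indep_seq Ns') {zs'})"
      by (intro mult_mono hd IH) auto
    also have "\<dots> = ennreal (exp (sum_list cs)) * (emeasure N {z} * emeasure (indep_seq Ns') {zs'})"
      by (simp add: cs exp_add ennreal_mult' mult_ac)
    also have "emeasure N {z} * emeasure (indep_seq Ns') {zs'} = emeasure (indep_seq Ns) {zs}"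
      using eN Cons2 Ns by (simp del: indep_seq.simps)
    finally show ?thesis .
  qed
qed


lemma arith_bound:
  fixes d :: "nat \<Rightarrow> real"
  assumes m: "m \<ge> 1" and s: "(\<Sum>k=1..2*m. \<bar>d k\<bar>) \<le> 1"
  shows "(\<Sum>k\<in>{m+1..<2*m+1}. \<bar>d k + (\<Sum>j=1..m. d j) / real m\<bar>) \<le> 1"
proof -
  have split: "(\<Sum>k=1..2*m. \<bar>d k\<bar>) = (\<Sum>k=1..m. \<bar>d k\<bar>) + (\<Sum>k=m+1..m+m. \<bar>d k\<bar>)"
    using sum.ub_add_nat[of 1 m "\<lambda>k. \<bar>d k\<bar>" m] m by (simp add: mult_2)
  have iv: "{m+1..<2*m+1} = {m+1..m+m}" by auto
  have "(\<Sum>k\<in>{m+1..<2*m+1}. \<bar>d k + (\<Sum>j=1..m. d j) / real m\<bar>)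
      \<le> (\<Sum>k\<in>{m+1..m+m}. \<bar>d k\<bar> + \<bar>\<Sum>j=1..m. d j\<bar> / real m)"
    unfolding iv by (intro sum_mono) (simp add: abs_triangle_ineq[THEN order_trans])
  also have "\<dots> = (\<Sum>k\<in>{m+1..m+m}. \<bar>d k\<bar>) + \<bar>\<Sum>j=1..m. d j\<bar>"
    using m by (simp add: sum.distrib)
  also have "\<dots> \<le> (\<Sum>k\<in>{m+1..m+m}. \<bar>d k\<bar>) + (\<Sum>j=1..m. \<bar>d j\<bar>)"
    by (simp add: sum_abs)
  also have "\<dots> \<le> 1" using s split by simp
  finally show ?thesis .
qed

definition S2 :: "nat \<Rightarrow> real \<Rightarrow> (nat \<Rightarrow> real) \<Rightarrow> int list \<Rightarrow> int list measure" where
  "S2 m lam g s1 = indep_seq (map (\<lambda>k. perturb (g k) (- ((\<Sum>k=1..m. real_of_int (s1 ! (k - 1)) - g k) / real m)) lam) [m+1..<2*m+1])"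

lemma okm_S2: "lam > 0 \<Longrightarrow> okm (S2 m lam g s1)"
  unfolding S2_def by (rule okm_indep) (auto simp: okm_def subprob_perturb)

lemma okm_inner: "lam > 0 \<Longrightarrow> okm (bind (S2 m lam g s1) (\<lambda>s2. return (count_space UNIV) (s1 @ s2)))"
  by (intro okm_bind okm_S2 okm_return)

lemma inner_eq:
  assumes "lam > 0"
  shows "emeasure (bind (S2 m lam g s1) (\<lambda>s2. return (count_space UNIV) (s1 @ s2))) {out}
    = (if (\<exists>zs. out = s1 @ zs) then emeasure (S2 m lam g s1) {drop (length s1) out} else 0)"
proof -
  have "emeasure (bind (S2 m lam g s1) (\<lambda>s2. return (count_space UNIV) (s1 @ s2))) {out}
     = (\<integral>\<^sup>+s2. indicator {out} (s1 @ s2) \<partial>S2 m lam g s1)"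
    by (subst emeasure_bind_ok[OF okm_S2[OF assms] okm_return]) simp
  also have "\<dots> = (if (\<exists>zs. out = s1 @ zs) then emeasure (S2 m lam g s1) {drop (length s1) out} else 0)"
  proof (cases "\<exists>zs. out = s1 @ zs")
    case True
    then obtain zs where zs: "out = s1 @ zs" by blast
    have "(\<integral>\<^sup>+s2. indicator {out} (s1 @ s2) \<partial>S2 m lam g s1) = (\<integral>\<^sup>+s2. indicator {zs} s2 \<partial>S2 m lam g s1)"
      by (intro nn_integral_cong) (simp add: zs indicator_def)
    also have "\<dots> = emeasure (S2 m lam g s1) {zs}"
      by (rule nn_integral_indicator) (use okm_S2[OF assms] in \<open>simp add: okm_def\<close>)
    finally show ?thesis using True zs by simp
  next
    case False
    then have "(\<integral>\<^sup>+s2. indicator {out} (s1 @ s2) \<partial>S2 m lam g s1) = (\<integral>\<^sup>+s2. 0 \<partial>S2 m lam g s1)"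
      by (intro nn_integral_cong) (auto simp: indicator_def)
    then show ?thesis using False by simp
  qed
  finally show ?thesis .
qed

lemma S2_cmp:
  assumes epsL: "epsL > 0" and m: "m \<ge> 1"
    and s: "(\<Sum>k=1..2*m. \<bar>g k - g' k\<bar>) \<le> 1"
  shows "emeasure (S2 m (1/epsL) g s1) {zs} \<le> ennreal (exp epsL) * emeasure (S2 m (1/epsL) g' s1) {zs}"
proof -
  define lam where "lam = 1/epsL"
  have lam: "lam > 0" using epsL by (simp add: lam_def)
  define mu where "mu g = (\<Sum>k=1..m. real_of_int (s1 ! (k - 1)) - g k) / real m" for g :: "nat \<Rightarrow> real"
  define D where "D = (\<Sum>j=1..m. g j - g' j)"
  have mud: "mu g' - mu g = D / real m"
    unfolding mu_def D_def by (simp add: diff_divide_distrib[symmetric] sum_subtractf[symmetric])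
  define cs where "cs = map (\<lambda>k. \<bar>(g k + - mu g) - (g' k + - mu g')\<bar> / lam) [m+1..<2*m+1]"
  have "emeasure (S2 m lam g s1) {zs} \<le> ennreal (exp (sum_list cs)) * emeasure (S2 m lam g' s1) {zs}"
    unfolding S2_def mu_def[symmetric]
  proof (rule indep_cmp)
    show "length cs = length (map (\<lambda>k. perturb (g k) (- mu g) lam) [m + 1..<2 * m + 1])"
      by (simp add: cs_def)
    show "\<And>M. M \<in> set (map (\<lambda>k. perturb (g k) (- mu g) lam) [m + 1..<2 * m + 1]) \<Longrightarrow> okm M"
      using lam by (auto simp: okm_def subprob_perturb)
    show "\<And>M. M \<in> set (map (\<lambda>k. perturb (g' k) (- mu g') lam) [m + 1..<2 * m + 1]) \<Longrightarrow> okm M"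
      using lam by (auto simp: okm_def subprob_perturb)
    fix i z assume i: "i < length (map (\<lambda>k. perturb (g k) (- mu g) lam) [m + 1..<2 * m + 1])"
    then show "emeasure (map (\<lambda>k. perturb (g k) (- mu g) lam) [m + 1..<2 * m + 1] ! i) {z}
         \<le> ennreal (exp (cs ! i)) * emeasure (map (\<lambda>k. perturb (g' k) (- mu g') lam) [m + 1..<2 * m + 1] ! i) {z}"
      using perturb_cmp[OF lam, where f="g (Suc (m + i))" and mu="- mu g" and z=z and f'="g' (Suc (m + i))" and mu'="- mu g'"]
      by (simp add: cs_def del: upt_Suc)
  qed simp
  also have "sum_list cs = (\<Sum>k\<in>{m+1..<2*m+1}. \<bar>(g k - g' k) + D / real m\<bar>) * epsL"
  proof -
    have "sum_list cs = (\<Sum>k\<in>{m+1..<2*m+1}. \<bar>(g k + - mu g) - (g' k + - mu g')\<bar> / lam)"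
      unfolding cs_def by (simp add: sum_set_upt_conv_sum_list_nat[symmetric])
    also have "\<dots> = (\<Sum>k\<in>{m+1..<2*m+1}. \<bar>(g k - g' k) + D / real m\<bar>) * epsL"
      unfolding sum_distrib_right
      by (intro sum.cong refl) (simp add: lam_def mud[symmetric] algebra_simps)
    finally show ?thesis .
  qed
  also have "ennreal (exp ((\<Sum>k\<in>{m+1..<2*m+1}. \<bar>(g k - g' k) + D / real m\<bar>) * epsL)) \<le> ennreal (exp epsL)"
  proof -
    have "(\<Sum>k\<in>{m+1..<2*m+1}. \<bar>(g k - g' k) + D / real m\<bar>) \<le> 1"
      using arith_bound[OF m, of "\<lambda>k. g k - g' k"] s by (simp add: D_def)
    then have "(\<Sum>k\<in>{m+1..<2*m+1}. \<bar>(g k - g' k) + D / real m\<bar>) * epsL \<le> epsL"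
      using epsL by (simp add: mult_le_cancel_right1)
    then show ?thesis by (intro ennreal_leI) simp
  qed
  then have "ennreal (exp ((\<Sum>k\<in>{m+1..<2*m+1}. \<bar>(g k - g' k) + D / real m\<bar>) * epsL)) * emeasure (S2 m lam g' s1) {zs}
     \<le> ennreal (exp epsL) * emeasure (S2 m lam g' s1) {zs}"
    by (rule mult_right_mono) simp
  finally show ?thesis unfolding lam_def .
qed

theorem theorem3:
  fixes m :: nat and epsL :: real and p :: "nat \<Rightarrow> 'a" and \<tau> \<tau>' :: "'a list"
    and out :: "int list"
  assumes "m \<ge> 1" and "epsL > 0"
    and "adjacent m p \<tau> \<tau>'"
  shows "emeasure (mech m epsL p \<tau>) {out} \<le> ennreal (exp epsL) * emeasure (mech m epsL p \<tau>') {out}"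
proof -
  define lam where "lam = 1/epsL"
  have lam: "lam > 0" using assms(2) by (simp add: lam_def)
  define S1 where "S1 = indep_seq (map (\<lambda>k. perturb 0 0 lam) [1..<m+1])"
  have okS1: "okm S1" unfolding S1_def using lam
    by (intro okm_indep) (auto simp: okm_def subprob_perturb)
  have mech_eq: "mech m epsL p t = bind S1 (\<lambda>s1. bind (S2 m lam (\<lambda>k. real (count_list t (p k))) s1) (\<lambda>s2. return (count_space UNIV) (s1 @ s2)))" for t
  proof -
    have eq: "map (\<lambda>k. perturb (real (count_list t (p k))) (- real (count_list t (p k))) lam) [1..<m+1]
        = map (\<lambda>k. perturb 0 0 lam) [1..<m+1]"
      by (intro map_cong refl perturb_eq) simp
    show ?thesis unfolding mech_def Let_def S1_def S2_def lam_def[symmetric] by (simp only: eq)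
  qed
  define f where "f = (\<lambda>k. real (count_list \<tau> (p k)))"
  define f' where "f' = (\<lambda>k. real (count_list \<tau>' (p k)))"
  have s: "(\<Sum>k=1..2*m. \<bar>f k - f' k\<bar>) \<le> 1"
    using assms(3) unfolding adjacent_def f_def f'_def by simp
  have "emeasure (mech m epsL p \<tau>) {out} = (\<integral>\<^sup>+s1. emeasure (bind (S2 m lam f s1) (\<lambda>s2. return (count_space UNIV) (s1 @ s2))) {out} \<partial>S1)"
    unfolding mech_eq f_def by (rule emeasure_bind_ok[OF okS1 okm_inner[OF lam]])
  also have "\<dots> \<le> (\<integral>\<^sup>+s1. ennreal (exp epsL) * emeasure (bind (S2 m lam f' s1) (\<lambda>s2. return (count_space UNIV) (s1 @ s2))) {out} \<partial>S1)"
  proof (rule nn_integral_mono)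
    fix s1
    show "emeasure (bind (S2 m lam f s1) (\<lambda>s2. return (count_space UNIV) (s1 @ s2))) {out}
      \<le> ennreal (exp epsL) * emeasure (bind (S2 m lam f' s1) (\<lambda>s2. return (count_space UNIV) (s1 @ s2))) {out}"
      by (simp only: inner_eq[OF lam]) (use S2_cmp[OF assms(2) assms(1) s] in \<open>simp add: lam_def\<close>)
  qed
  also have "\<dots> = ennreal (exp epsL) * (\<integral>\<^sup>+s1. emeasure (bind (S2 m lam f' s1) (\<lambda>s2. return (count_space UNIV) (s1 @ s2))) {out} \<partial>S1)"
    by (rule nn_integral_cmult) (simp add: okm_meas[OF okS1])
  also have "(\<integral>\<^sup>+s1. emeasure (bind (S2 m lam f' s1) (\<lambda>s2. return (count_space UNIV) (s1 @ s2))) {out} \<partial>S1) = emeasure (mech m epsL p \<tau>') {out}"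
    unfolding mech_eq f'_def by (rule emeasure_bind_ok[OF okS1 okm_inner[OF lam], symmetric])
  finally show ?thesis .
qed


end
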